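(* Let $M_n$ be the array indexed by $\{0,1,\dots,n\}^3$ with $(M_n)_{i,j,k}=\min\big(k\min(i,j),\ ij-(n-k)\max(0,i+j-n)\big)$. Then $M_n$ is a corner-sum hypermatrix of order $n$ and $M_n\ge C$ entrywise for every corner-sum hypermatrix $C$ of order $n$; i.e. $M_n$ is the unique minimum element of $(\mathcal C_n,\preceq)$.
   Context: Let $[0,n]=\{0,1,\dots,n\}$. A corner-sum hypermatrix of order $n$ is an integer array $C=(C_{i,j,k})_{i,j,k\in[0,n]}$ such that for all $i,j\in[0,n]$: $C_{i,j,0}=C_{i,0,j}=C_{0,i,j}=0$, $C_{i,j,n}=C_{i,n,j}=C_{n,i,j}=ij$, and for all $k\in\{1,\dots,n\}$ each of $C_{i,j,k}-C_{i,j,k-1}$, $C_{i,k,j}-C_{i,k-1,j}$, $C_{k,i,j}-C_{k-1,i,j}$ is an integer in $\{\max(0,i+j-n),\dots,\min(i,j)\}$. $\mathcal C_n$ is the set of these, ordered by $C\preceq D$ iff $C\ge D$ entrywise. *)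

theory Defs
  imports Main
begin

text \<open>A hypermatrix of order n is represented by a function nat => nat => nat => int;
only its values on the index cube [0,n]^3 are relevant.\<close>

definition band :: "nat \<Rightarrow> nat \<Rightarrow> nat \<Rightarrow> int set" where
  "band n i j = {max 0 (int i + int j - int n) .. int (min i j)}"

definition corner_sum :: "nat \<Rightarrow> (nat \<Rightarrow> nat \<Rightarrow> nat \<Rightarrow> int) \<Rightarrow> bool" where
  "corner_sum n C \<longleftrightarrow>
     (\<forall>i\<le>n. \<forall>j\<le>n.
        C i j 0 = 0 \<and> C i 0 j = 0 \<and> C 0 i j = 0 \<and>
        C i j n = int (i * j) \<and> C i n j = int (i * j) \<and> C n i j = int (i * j) \<and>
        (\<forall>k\<in>{1..n}.
           C i j k - C i j (k - 1) \<in> band n i j \<and>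
           C i k j - C i (k - 1) j \<in> band n i j \<and>
           C k i j - C (k - 1) i j \<in> band n i j))"

definition Mmin :: "nat \<Rightarrow> nat \<Rightarrow> nat \<Rightarrow> nat \<Rightarrow> int" where
  "Mmin n i j k = min (int k * int (min i j))
                      (int i * int j - (int n - int k) * max 0 (int i + int j - int n))"

end

theory Submission
  imports Defs
begin

lemma up_bound:
  fixes f :: "nat \<Rightarrow> int"
  assumes "\<forall>k\<in>{1..n}. f k - f (k - 1) \<le> a" "f 0 = 0"
  shows "k \<le> n \<Longrightarrow> f k \<le> int k * a"
proof (induction k)
  case 0 then show ?case using assms by simp
next
  case (Suc k)
  then have "f (Suc k) - f k \<le> a" using assms(1) by force
  then show ?case using Suc by (simp add: algebra_simps)
qed

lemma down_bound:
  fixes f :: "nat \<Rightarrow> int"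
  assumes "\<forall>k\<in>{1..n}. b \<le> f k - f (k - 1)" "f n = v"
  shows "d \<le> n \<Longrightarrow> f (n - d) \<le> v - int d * b"
proof (induction d)
  case 0 then show ?case using assms by simp
next
  case (Suc d)
  then have "n - d \<in> {1..n}" by auto
  then have "b \<le> f (n - d) - f (n - d - 1)" using assms(1) by blast
  moreover have "n - d - 1 = n - Suc d" by simp
  ultimately show ?case using Suc by (simp add: algebra_simps)
qed

lemma min_diff:
  fixes x y a b :: int
  assumes "b \<le> a"
  shows "b \<le> min (x + a) (y + b) - min x y \<and> min (x + a) (y + b) - min x y \<le> a"
  using assms by (auto simp: min_def)

lemma Mmin_swap12: "Mmin n i j k = Mmin n j i k"
  unfolding Mmin_def by (simp add: min.commute max.commute mult.commute add.commute)

lemma Mmin_sym_form: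
  assumes "k \<le> n"
  shows "Mmin n i j k = min (min (int i * int j) (int j * int k))
     (min (int k * int i) (int i * int j + int j * int k + int k * int i
        - int n * (int i + int j + int k) + int n * int n))"
proof -
  have 1: "int k * int (min i j) = min (int k * int i) (int k * int j)"
  proof (cases "i \<le> j")
    case True
    then have "int k * int i \<le> int k * int j" by (simp add: mult_left_mono)
    then show ?thesis using True by (simp add: min_def)
  next
    case False
    then have "int k * int j \<le> int k * int i" by (simp add: mult_left_mono)
    then show ?thesis using False by (simp add: min_absorb2)
  qed
  have 2: "(int n - int k) * max 0 (int i + int j - int n)
     = max 0 ((int n - int k) * (int i + int j - int n))"
  proof (cases "int n \<le> int i + int j")
    case True
    then have "0 \<le> (int n - int k) * (int i + int j - int n)" using assms by simp
    then show ?thesis using True by (simp add: max_def)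
  next
    case False
    then have "(int n - int k) * (int i + int j - int n) \<le> 0" using assms
      by (simp add: mult_nonneg_nonpos)
    then show ?thesis using False by (simp add: max_def)
  qed
  have 3: "int i * int j - max 0 ((int n - int k) * (int i + int j - int n))
     = min (int i * int j) (int i * int j + int j * int k + int k * int i
        - int n * (int i + int j + int k) + int n * int n)"
    by (simp add: max_def min_def algebra_simps)
  show ?thesis unfolding Mmin_def 1 2 3
    by (simp add: min.commute min.left_commute min.assoc mult.commute)
qed

lemma Mmin_swap23:
  assumes "j \<le> n" "k \<le> n"
  shows "Mmin n i j k = Mmin n i k j"
  using assms by (simp add: Mmin_sym_form algebra_simps min.commute min.left_commute min.assoc)

lemma Mmin_step:
  assumes "i \<le> n" "j \<le> n" "k \<in> {1..n}"
  shows "Mmin n i j k - Mmin n i j (k - 1) \<in> band n i j"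
proof -
  define a where "a = int (min i j)"
  define b where "b = max 0 (int i + int j - int n)"
  have ba: "b \<le> a" using assms unfolding a_def b_def by auto
  define x where "x = int (k - 1) * a"
  define y where "y = int i * int j - (int n - int (k - 1)) * b"
  have k: "int k = int (k - 1) + 1" using assms by auto
  have e1: "Mmin n i j k = min (x + a) (y + b)"
    unfolding Mmin_def x_def y_def a_def[symmetric] b_def[symmetric] k
    by (simp add: algebra_simps)
  have e2: "Mmin n i j (k - 1) = min x y"
    unfolding Mmin_def x_def y_def a_def[symmetric] b_def[symmetric] by simp
  show ?thesis unfolding band_def e1 e2 using min_diff[OF ba, of x y]
    unfolding a_def b_def by simp
qed

lemma Mmin_corner: "corner_sum n (Mmin n)"
  unfolding corner_sum_def
proof (intro allI impI conjI ballI)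
  fix i j assume ij: "i \<le> n" "j \<le> n"
  have z: "Mmin n i j 0 = 0"
  proof -
    have "int i * int j - int n * max 0 (int i + int j - int n) \<ge> 0"
    proof (cases "i + j \<le> n")
      case True then show ?thesis by simp
    next
      case False
      then have "int i * int j - int n * max 0 (int i + int j - int n)
          = (int n - int i) * (int n - int j)" by (simp add: algebra_simps)
      then show ?thesis using ij by simp
    qed
    then show ?thesis unfolding Mmin_def by simp
  qed
  have t: "Mmin n i j n = int (i * j)"
  proof -
    have "int i * int j \<le> int n * int (min i j)"
        proof (cases "i \<le> j")
      case True
      have "int i * int j \<le> int i * int n" using ij by (simp add: mult_left_mono)
      then show ?thesis using True by (simp add: min_def mult.commute)
    next
      case False
      have "int i * int j \<le> int n * int j" using ij by (simp add: mult_right_mono)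
      then show ?thesis using False by (simp add: min_def)
    qed
    then show ?thesis unfolding Mmin_def by simp
  qed
  show "Mmin n i j 0 = 0" by (rule z)
  show "Mmin n i 0 j = 0" using ij by (simp add: Mmin_def max_def)
  show "Mmin n 0 i j = 0" using ij by (simp add: Mmin_def max_def)
  show "Mmin n i j n = int (i * j)" by (rule t)
  show "Mmin n i n j = int (i * j)"
    using Mmin_swap23[of n n j i] ij unfolding Mmin_def by (simp add: min_def max_def algebra_simps)
  show "Mmin n n i j = int (i * j)"
    using Mmin_swap23[of n n j i] Mmin_swap12[of n i n j] ij unfolding Mmin_def
    by (simp add: min_def max_def algebra_simps)
  fix k assume k: "k \<in> {1..n}"
  show "Mmin n i j k - Mmin n i j (k - 1) \<in> band n i j"
    using Mmin_step ij k by blast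
  have "Mmin n i k j = Mmin n i j k" "Mmin n i (k - 1) j = Mmin n i j (k - 1)"
    using Mmin_swap23 ij k by auto
  then show "Mmin n i k j - Mmin n i (k - 1) j \<in> band n i j"
    using Mmin_step ij k by simp
  have "Mmin n k i j = Mmin n i j k" "Mmin n (k - 1) i j = Mmin n i j (k - 1)"
    using Mmin_swap23 Mmin_swap12 ij k by (metis atLeastAtMost_iff diff_le_self le_trans)+
  then show "Mmin n k i j - Mmin n (k - 1) i j \<in> band n i j"
    using Mmin_step ij k by simp
qed

lemma Mmin_max:
  assumes C: "corner_sum n C" and ij: "i \<le> n" "j \<le> n" "k \<le> n"
  shows "C i j k \<le> Mmin n i j k"
proof -
  have steps: "\<forall>k\<in>{1..n}. C i j k - C i j (k - 1) \<in> band n i j"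
    and z: "C i j 0 = 0" and t: "C i j n = int (i * j)"
    using C ij unfolding corner_sum_def by auto
  have u: "\<forall>k\<in>{1..n}. C i j k - C i j (k - 1) \<le> int (min i j)"
    using steps unfolding band_def by auto
  have l: "\<forall>k\<in>{1..n}. max 0 (int i + int j - int n) \<le> C i j k - C i j (k - 1)"
    using steps unfolding band_def by auto
  have 1: "C i j k \<le> int k * int (min i j)"
    using up_bound[where f="C i j", OF u z] ij by simp
  have 2: "C i j (n - (n - k)) \<le> int (i * j) - int (n - k) * max 0 (int i + int j - int n)"
    using down_bound[where f="C i j", OF l t, of "n - k"] by simp
  have 3: "int (n - k) = int n - int k" using ij by simp
  show ?thesis using 1 2 ij unfolding Mmin_def 3 by simp
qed

theorem mainTheorem9:
  fixes n :: nat
  shows "corner_sum n (Mmin n) \<and>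
         (\<forall>C. corner_sum n C \<longrightarrow>
              (\<forall>i\<le>n. \<forall>j\<le>n. \<forall>k\<le>n. Mmin n i j k \<ge> C i j k))"
  using Mmin_corner Mmin_max by blast

end
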